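(* Let $\sigma:\mathbb R^n\to\mathbb R^{n\times m}$ be of class $C^2$, with columns $\sigma_1,\dots,\sigma_m$, and let $u:\mathbb R^n\to\mathbb R$ be of class $C^3$. Let $\bar x\in\mathbb R^n$ be a point such that $\nabla u(\bar x)\cdot\sigma_i(\bar x)=0$ for all $i=1,\dots,m$, and suppose that $$\max_{a_1,a_2\in B_1(0)}\Big\{ -\mathrm{Tr}\big(D^2u\, \sigma(a_1+a_2)\otimes\sigma(a_1+a_2) (\bar x)\big)-\big(D(\sigma (a_1+a_2))\,\sigma (a_1+a_2)+[\sigma a_1,\sigma a_2]\big)(\bar x)\cdot\nabla u(\bar x)\Big\}>0.$$ Then the target $\{x:u(x)\leq u(\bar x)\}$ is small time locally attainable (STLA) by the system $\dot x_t=\sigma(x_t)a_t$ at $\bar x$.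
   Context: The control system is $\dot x_t=\sigma(x_t)a_t$, $x_0\in\mathbb R^n$, with controls $a_\cdot:[0,+\infty)\to B_1(0)=\{a\in\mathbb R^m:|a|\le 1\}$ piecewise continuous. For $a\in\mathbb R^m$, $\sigma a$ denotes the vector field $x\mapsto\sigma(x)a$, and $D(\sigma a)$ its Jacobian matrix. For $C^1$ vector fields $f,g$, the Lie bracket is $[f,g](x)=Dg(x)f(x)-Df(x)g(x)$, where $Df=(\partial_{x_j}f_i)_{i,j}$ is the Jacobian. For $v\in\mathbb R^n$, $\mathrm{Tr}(D^2u\, v\otimes v)=D^2u\,v\cdot v$. A target $\mathbf T=\{x:u(x)\le u(\bar x)\}$ is STLA at $\bar x$ if for every $t>0$ the point $\bar x$ lies in the interior of the set of initial points from which some admissible trajectory of the system reaches $\mathbf T$ in time less than $t$. *)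

theory Defs
  imports "HOL-Analysis.Analysis"
begin

text \<open>Points of R^n are vectors real^'n, controls are in real^'m, and
  sigma(x) is the n x m matrix real^'m^'n (rows indexed by 'n, columns by 'm).\<close>

definition partial :: "'n::finite \<Rightarrow> (real^'n \<Rightarrow> real) \<Rightarrow> real^'n \<Rightarrow> real" where
  "partial j g x = deriv (\<lambda>t. g (x + t *\<^sub>R axis j 1)) 0"

fun Ck :: "nat \<Rightarrow> (real^'n::finite \<Rightarrow> real) \<Rightarrow> bool" where
  "Ck 0 g = continuous_on UNIV g"
| "Ck (Suc k) g = ((\<forall>x. g differentiable (at x)) \<and> (\<forall>j. Ck k (partial j g)))"

definition grad :: "(real^'n::finite \<Rightarrow> real) \<Rightarrow> real^'n \<Rightarrow> real^'n" where
  "grad g x = (\<chi> j. partial j g x)"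

definition hess :: "(real^'n::finite \<Rightarrow> real) \<Rightarrow> real^'n \<Rightarrow> real^'n^'n" where
  "hess g x = (\<chi> i j. partial i (partial j g) x)"

definition jac :: "(real^'n::finite \<Rightarrow> real^'n) \<Rightarrow> real^'n \<Rightarrow> real^'n^'n" where
  "jac f x = (\<chi> i j. partial j (\<lambda>y. f y $ i) x)"

definition lie_bracket :: "(real^'n::finite \<Rightarrow> real^'n) \<Rightarrow> (real^'n \<Rightarrow> real^'n) \<Rightarrow> real^'n \<Rightarrow> real^'n" where
  "lie_bracket f g x = jac g x *v f x - jac f x *v g x"

definition vf :: "(real^'n::finite \<Rightarrow> real^'m::finite^'n) \<Rightarrow> real^'m \<Rightarrow> real^'n \<Rightarrow> real^'n" where
  "vf \<sigma> a x = \<sigma> x *v a"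

definition piecewise_continuous :: "(real \<Rightarrow> 'b::real_normed_vector) \<Rightarrow> bool" where
  "piecewise_continuous a \<longleftrightarrow>
     (\<forall>T>0. \<exists>S. finite S \<and> S \<subseteq> {0..T} \<and> continuous_on ({0..T} - S) a \<and>
        (\<forall>s\<in>S. (s > 0 \<longrightarrow> (\<exists>l. (a \<longlongrightarrow> l) (at_left s))) \<and>
                (\<exists>r. (a \<longlongrightarrow> r) (at_right s))))"

definition admissible :: "(real \<Rightarrow> real^'m::finite) \<Rightarrow> bool" where
  "admissible a \<longleftrightarrow> (\<forall>t\<ge>0. norm (a t) \<le> 1) \<and> piecewise_continuous a"

definition trajectory ::
  "(real^'n::finite \<Rightarrow> real^'m::finite^'n) \<Rightarrow> (real \<Rightarrow> real^'m) \<Rightarrow> real^'n \<Rightarrow> real \<Rightarrow> (real \<Rightarrow> real^'n) \<Rightarrow> bool" where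
  "trajectory \<sigma> a x0 \<tau> x \<longleftrightarrow> x 0 = x0 \<and>
     (\<forall>t\<in>{0..\<tau>}. ((\<lambda>s. \<sigma> (x s) *v a s) has_integral (x t - x0)) {0..t})"

definition reach_set ::
  "(real^'n::finite \<Rightarrow> real^'m::finite^'n) \<Rightarrow> (real^'n) set \<Rightarrow> real \<Rightarrow> (real^'n) set" where
  "reach_set \<sigma> T t = {x0. \<exists>a. admissible a \<and> (\<exists>\<tau>. 0 \<le> \<tau> \<and> \<tau> < t \<and>
        (\<exists>x. trajectory \<sigma> a x0 \<tau> x \<and> x \<tau> \<in> T))}"

definition STLA :: "(real^'n::finite \<Rightarrow> real^'m::finite^'n) \<Rightarrow> (real^'n) set \<Rightarrow> real^'n \<Rightarrow> bool" where
  "STLA \<sigma> T xb \<longleftrightarrow> (\<forall>t>0. xb \<in> interior (reach_set \<sigma> T t))"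

end

theory Submission
  imports Defs "HOL-Analysis.Analysis"
begin

definition clamp :: "real \<Rightarrow> real \<Rightarrow> real" where "clamp T t = max 0 (min T t)"

lemma clamp_in: "0 \<le> T \<Longrightarrow> clamp T t \<in> {0..T}" by (auto simp: clamp_def)
lemma clamp_id: "t \<in> {0..T} \<Longrightarrow> clamp T t = t" by (auto simp: clamp_def)
lemma continuous_clamp: "continuous_on UNIV (clamp T)"
  unfolding clamp_def by (intro continuous_intros)

lemma ode_exists:
  fixes h :: "'a::euclidean_space \<Rightarrow> 'a"
  assumes lip: "\<And>x y. norm (h x - h y) \<le> L * norm (x - y)"
    and bnd: "\<And>x. norm (h x) \<le> M"
    and hc: "continuous_on UNIV h"
    and T: "0 < T" and L: "0 \<le> L" "L * T \<le> 1/2"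
  shows "\<exists>Y. \<forall>x0. Y x0 0 = x0 \<and>
     (\<forall>t\<in>{0..T}. (Y x0 has_vector_derivative h (Y x0 t)) (at t within {0..T})) \<and>
     (\<forall>t\<in>{0..T}. ((\<lambda>r. h (Y x0 r)) has_integral (Y x0 t - x0)) {0..t}) \<and>
     continuous_on {0..T} (Y x0) \<and>
     (\<forall>z0. \<forall>t\<in>{0..T}. norm (Y x0 t - Y z0 t) \<le> 2 * norm (x0 - z0))"
proof -
  have M: "0 \<le> M" using bnd[of 0] norm_ge_zero order_trans by blast
  define I where "I y c = integral {0..c} (\<lambda>r. h (apply_bcontfun y r))" for y :: "real \<Rightarrow>\<^sub>C 'a" and c
  have hy: "continuous_on S (\<lambda>r. h (apply_bcontfun y r))" for y :: "real \<Rightarrow>\<^sub>C 'a" and S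
    by (rule continuous_on_compose2[OF hc]) auto
  have Ibound: "norm (I y c) \<le> M * c" if "0 \<le> c" for y c
    unfolding I_def using integral_bound[OF that hy bnd] by simp
  have Icont: "continuous_on {0..T} (I y)" for y
  proof -
    have "\<forall>x\<in>{0..T}. ((I y) has_vector_derivative h (apply_bcontfun y x)) (at x within {0..T})"
      unfolding I_def using integral_has_vector_derivative[OF hy] by blast
    then show ?thesis
      using has_vector_derivative_continuous continuous_on_eq_continuous_within by blast
  qed
  define \<Phi> where "\<Phi> x0 y = Bcontfun (\<lambda>t. x0 + I y (clamp T t))" for x0 y
  have inbc: "(\<lambda>t. x0 + I y (clamp T t)) \<in> bcontfun" for x0 y
  proof (rule bcontfun_normI)
    show "continuous_on UNIV (\<lambda>t. x0 + I y (clamp T t))"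
      by (intro continuous_intros continuous_on_compose2[OF Icont continuous_clamp]) (use T clamp_in in auto)
    fix t
    have "norm (x0 + I y (clamp T t)) \<le> norm x0 + norm (I y (clamp T t))" by (rule norm_triangle_ineq)
    also have "\<dots> \<le> norm x0 + M * T"
      using Ibound[of "clamp T t" y] clamp_in[of T t] T M
      by (smt (verit, best) atLeastAtMost_iff mult_left_mono)
    finally show "norm (x0 + I y (clamp T t)) \<le> norm x0 + M * T" .
  qed
  have \<Phi>app: "apply_bcontfun (\<Phi> x0 y) t = x0 + I y (clamp T t)" for x0 y t
    unfolding \<Phi>_def using inbc by (simp add: Bcontfun_inverse)
  have Idiff: "norm (I y c - I z c) \<le> L * dist y z * c" if "0 \<le> c" for y z c
  proof -
    have "I y c - I z c = integral {0..c} (\<lambda>r. h (apply_bcontfun y r) - h (apply_bcontfun z r))"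
      unfolding I_def by (rule integral_diff[symmetric]) (auto intro!: integrable_continuous_real hy)
    also have "norm \<dots> \<le> (L * dist y z) * (c - 0)"
    proof (rule integral_bound[OF that])
      show "continuous_on {0..c} (\<lambda>r. h (apply_bcontfun y r) - h (apply_bcontfun z r))"
        by (intro continuous_intros hy)
      fix r
      have "norm (h (apply_bcontfun y r) - h (apply_bcontfun z r)) \<le> L * norm (apply_bcontfun y r - apply_bcontfun z r)"
        by (rule lip)
      also have "\<dots> \<le> L * dist y z"
        using dist_bounded[of y r z] L by (simp add: dist_norm mult_left_mono)
      finally show "norm (h (apply_bcontfun y r) - h (apply_bcontfun z r)) \<le> L * dist y z" .
    qed
    finally show ?thesis by simp
  qed
  have contr: "dist (\<Phi> x0 y) (\<Phi> z0 z) \<le> norm (x0 - z0) + 1/2 * dist y z" for x0 z0 y z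
  proof (rule dist_bound)
    fix t
    have c: "clamp T t \<in> {0..T}" using clamp_in T by auto
    have "dist (\<Phi> x0 y t) (\<Phi> z0 z t) = norm ((x0 - z0) + (I y (clamp T t) - I z (clamp T t)))"
      by (simp add: \<Phi>app dist_norm algebra_simps)
    also have "\<dots> \<le> norm (x0 - z0) + norm (I y (clamp T t) - I z (clamp T t))" by (rule norm_triangle_ineq)
    also have "norm (I y (clamp T t) - I z (clamp T t)) \<le> L * dist y z * clamp T t"
      using Idiff c by auto
    also have "L * dist y z * clamp T t \<le> L * dist y z * T"
      using c L by (intro mult_left_mono) auto
    also have "\<dots> \<le> 1/2 * dist y z"
      using L by (metis mult.commute mult.left_commute mult_right_mono zero_le_dist)
    finally show "dist (\<Phi> x0 y t) (\<Phi> z0 z t) \<le> norm (x0 - z0) + 1/2 * dist y z" by simp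
  qed
  have "\<forall>x0. \<exists>y. \<Phi> x0 y = y"
  proof
    fix x0
    show "\<exists>y. \<Phi> x0 y = y"
      using banach_fix_type[of "1/2" "\<Phi> x0"] contr[of x0 _ x0] by auto
  qed
  then obtain F where F: "\<And>x0. \<Phi> x0 (F x0) = F x0" by metis
  define Y where "Y x0 t = apply_bcontfun (F x0) t" for x0 t
  have Yeq: "Y x0 t = x0 + I (F x0) (clamp T t)" for x0 t
    unfolding Y_def by (metis F \<Phi>app)
  have Yeq': "Y x0 t = x0 + integral {0..t} (\<lambda>r. h (Y x0 r))" if "t \<in> {0..T}" for x0 t
    using Yeq[of x0 t] clamp_id[OF that] unfolding I_def Y_def by simp
  show ?thesis
  proof (intro exI allI conjI ballI)
    fix x0
    show "Y x0 0 = x0" using Yeq'[of 0 x0] T by simp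
    fix t assume t: "t \<in> {0..T}"
    have hY: "continuous_on S (\<lambda>r. h (Y x0 r))" for S unfolding Y_def by (rule hy)
    show "(Y x0 has_vector_derivative h (Y x0 t)) (at t within {0..T})"
    proof (rule has_vector_derivative_transform[OF t])
      show "Y x0 s = x0 + integral {0..s} (\<lambda>r. h (Y x0 r))" if "s \<in> {0..T}" for s using Yeq'[OF that] .
      show "((\<lambda>s. x0 + integral {0..s} (\<lambda>r. h (Y x0 r))) has_vector_derivative h (Y x0 t)) (at t within {0..T})"
        using has_vector_derivative_add[OF has_vector_derivative_const integral_has_vector_derivative[OF hY t]] by simp
    qed
    show "((\<lambda>r. h (Y x0 r)) has_integral (Y x0 t - x0)) {0..t}"
      using Yeq'[OF t] integrable_integral[OF integrable_continuous_real[OF hY]] by simp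
  next
    fix x0
    show "continuous_on {0..T} (Y x0)" unfolding Y_def by simp
  next
    fix x0 z0 t
    have "dist (F x0) (F z0) \<le> norm (x0 - z0) + 1/2 * dist (F x0) (F z0)"
      using contr[of x0 "F x0" z0 "F z0"] F by simp
    then have "dist (F x0) (F z0) \<le> 2 * norm (x0 - z0)" by simp
    then show "norm (Y x0 t - Y z0 t) \<le> 2 * norm (x0 - z0)"
      unfolding Y_def using dist_bounded[of "F x0" t "F z0"] by (simp add: dist_norm)
  qed
qed

lemma partial_eq:
  assumes "(g has_derivative D) (at x)"
  shows "partial j g x = D (axis j 1)"
proof -
  have l: "linear D" using assms has_derivative_linear by blast
  have "((\<lambda>t. x + t *\<^sub>R axis j 1) has_derivative (\<lambda>t. t *\<^sub>R axis j 1)) (at (0::real))"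
    by (intro derivative_eq_intros) auto
  from has_derivative_compose[OF this] assms
  have "((\<lambda>t. g (x + t *\<^sub>R axis j 1)) has_derivative (\<lambda>t. D (t *\<^sub>R axis j 1))) (at 0)" by simp
  moreover have "(\<lambda>t. D (t *\<^sub>R axis j 1)) = (*) (D (axis j 1))"
    using linear.scaleR[OF l] by (auto simp: fun_eq_iff)
  ultimately have "((\<lambda>t. g (x + t *\<^sub>R axis j 1)) has_field_derivative D (axis j 1)) (at 0)"
    by (simp add: has_field_derivative_def)
  then show ?thesis unfolding partial_def by (rule DERIV_imp_deriv)
qed

lemma grad_has_derivative:
  fixes g :: "real^'n \<Rightarrow> real"
  assumes "g differentiable (at x)"
  shows "(g has_derivative (\<lambda>h. grad g x \<bullet> h)) (at x)"
proof -
  obtain D where D: "(g has_derivative D) (at x)" using assms differentiable_def by blast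
  have l: "linear D" using D has_derivative_linear by blast
  have "D h = grad g x \<bullet> h" for h
  proof -
    have "D h = D (\<Sum>j\<in>UNIV. h $ j *\<^sub>R axis j 1)"
      using basis_expansion[of h] by (simp add: scalar_mult_eq_scaleR)
    also have "\<dots> = (\<Sum>j\<in>UNIV. h $ j * D (axis j 1))"
      by (simp add: linear_sum[OF l] linear.scaleR[OF l])
    also have "\<dots> = (\<Sum>j\<in>UNIV. grad g x $ j * h $ j)"
      by (simp add: grad_def partial_eq[OF D] mult.commute)
    finally show ?thesis by (simp add: inner_vec_def)
  qed
  then have "D = (\<lambda>h. grad g x \<bullet> h)" by auto
  then show ?thesis using D by simp
qed

lemma jac_nth_mult: "(jac f x *v h) $ i = grad (\<lambda>y. f y $ i) x \<bullet> h"
  by (simp add: jac_def grad_def matrix_vector_mult_def inner_vec_def mult.commute)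

lemma jac_has_derivative:
  fixes f :: "real^'n \<Rightarrow> real^'n"
  assumes "\<And>i. (\<lambda>y. f y $ i) differentiable (at x)"
  shows "(f has_derivative (\<lambda>h. jac f x *v h)) (at x)"
proof (subst has_derivative_componentwise_within, intro ballI)
  fix b :: "real^'n" assume "b \<in> Basis"
  then obtain i where b: "b = axis i 1" by (auto simp: Basis_vec_def)
  have "((\<lambda>y. f y $ i) has_derivative (\<lambda>h. (jac f x *v h) $ i)) (at x)"
    unfolding jac_nth_mult by (rule grad_has_derivative[OF assms])
  then show "((\<lambda>xa. f xa \<bullet> b) has_derivative (\<lambda>xa. (jac f x *v xa) \<bullet> b)) (at x)"
    by (simp add: b inner_axis)
qed

lemma Ck2_D: "Ck 2 g \<Longrightarrow> g differentiable (at x) \<and> partial j g differentiable (at x) \<and> continuous_on UNIV (partial i (partial j g))"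
  by (simp add: numeral_2_eq_2)

lemma Ck3_D: "Ck 3 g \<Longrightarrow> g differentiable (at x) \<and> partial j g differentiable (at x) \<and> partial i (partial j g) differentiable (at x)"
  by (simp add: numeral_3_eq_3)

lemma partial_lin:
  fixes g :: "'k::finite \<Rightarrow> real^'n \<Rightarrow> real"
  assumes "\<And>k. g k differentiable (at x)"
  shows "partial j (\<lambda>y. \<Sum>k\<in>UNIV. g k y * c k) x = (\<Sum>k\<in>UNIV. partial j (g k) x * c k)"
proof -
  have "((\<lambda>y. \<Sum>k\<in>UNIV. g k y * c k) has_derivative (\<lambda>h. \<Sum>k\<in>UNIV. (grad (g k) x \<bullet> h) * c k)) (at x)"
    by (intro has_derivative_sum has_derivative_mult_left grad_has_derivative assms)
  from partial_eq[OF this] show ?thesis by (simp add: inner_axis grad_def)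
qed

lemma lip_real:
  fixes g :: "real^'n \<Rightarrow> real"
  assumes "\<And>x. g differentiable (at x)" "continuous_on UNIV (grad g)" "compact K" "convex K"
  shows "\<exists>B\<ge>0. \<forall>x\<in>K. \<forall>y\<in>K. \<bar>g x - g y\<bar> \<le> B * norm (x - y)"
proof -
  obtain B where B: "B \<ge> 0" "\<And>x. x \<in> K \<Longrightarrow> norm (grad g x) \<le> B"
    using continuous_on_compact_bound[OF assms(3) continuous_on_subset[OF assms(2)]] by blast
  have "\<forall>x\<in>K. \<forall>y\<in>K. norm (g x - g y) \<le> B * norm (x - y)"
  proof (intro ballI)
    fix x y assume "x \<in> K" "y \<in> K"
    show "norm (g x - g y) \<le> B * norm (x - y)"
    proof (rule differentiable_bound[OF assms(4) _ _ \<open>x \<in> K\<close> \<open>y \<in> K\<close>])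
      fix z assume "z \<in> K"
      show "(g has_derivative (\<lambda>h. grad g z \<bullet> h)) (at z within K)"
        using grad_has_derivative[OF assms(1)] has_derivative_at_withinI by blast
      show "onorm (\<lambda>h. grad g z \<bullet> h) \<le> B"
      proof (rule onorm_le)
        fix h
        have "norm (grad g z \<bullet> h) \<le> norm (grad g z) * norm h"
          using norm_cauchy_schwarz by (simp add: Cauchy_Schwarz_ineq2)
        also have "\<dots> \<le> B * norm h" using B(2)[OF \<open>z \<in> K\<close>] by (simp add: mult_right_mono)
        finally show "norm (grad g z \<bullet> h) \<le> B * norm h" .
      qed
    qed
  qed
  then show ?thesis using B(1) by auto
qed

lemma vf_comp: "vf \<sigma> a y $ i = (\<Sum>k\<in>UNIV. \<sigma> y $ i $ k * a $ k)"
  by (simp add: vf_def matrix_vector_mult_def)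

context
  fixes \<sigma> :: "real^'n \<Rightarrow> real^'m^'n"
  assumes sigma_C2: "\<forall>i j. Ck 2 (\<lambda>x. \<sigma> x $ i $ j)"
begin

lemma sig_diff: "(\<lambda>y. \<sigma> y $ i $ k) differentiable (at x)"
  using Ck2_D sigma_C2 by blast

lemma vf_comp_diff: "(\<lambda>y. vf \<sigma> a y $ i) differentiable (at x)"
proof -
  have "\<And>k. (\<lambda>y. \<sigma> y $ i $ k * a $ k) differentiable (at x)"
    by (rule differentiable_mult[OF sig_diff differentiable_const])
  then show ?thesis unfolding vf_comp by (intro differentiable_sum) auto
qed

lemma vf_has_derivative: "(vf \<sigma> a has_derivative (\<lambda>h. jac (vf \<sigma> a) x *v h)) (at x)"
  by (rule jac_has_derivative[OF vf_comp_diff])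

lemma vf_cont: "continuous_on S (vf \<sigma> a)"
  using vf_has_derivative has_derivative_continuous continuous_at_imp_continuous_on by blast

lemma vf_grad_cont: "continuous_on UNIV (grad (\<lambda>y. vf \<sigma> a y $ i))"
proof -
  have "grad (\<lambda>y. vf \<sigma> a y $ i) x = (\<chi> j. \<Sum>k\<in>UNIV. partial j (\<lambda>y. \<sigma> y $ i $ k) x * a $ k)" for x
    unfolding grad_def vf_comp using partial_lin[of "\<lambda>k y. \<sigma> y $ i $ k" x _ "\<lambda>k. a $ k", OF sig_diff] by simp
  moreover have "continuous_on UNIV (\<lambda>x. (\<chi> j. \<Sum>k\<in>UNIV. partial j (\<lambda>y. \<sigma> y $ i $ k) x * a $ k))"
  proof (intro continuous_intros)
    fix j k
    have "\<And>x. partial j (\<lambda>y. \<sigma> y $ i $ k) differentiable (at x)" using Ck2_D sigma_C2 by blast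
    then show "continuous_on UNIV (partial j (\<lambda>y. \<sigma> y $ i $ k))"
      using differentiable_imp_continuous_within continuous_at_imp_continuous_on by blast
  qed
  ultimately show ?thesis by simp
qed

lemma vf_lip:
  assumes "compact K" "convex K"
  shows "\<exists>L\<ge>0. \<forall>x\<in>K. \<forall>y\<in>K. norm (vf \<sigma> a x - vf \<sigma> a y) \<le> L * norm (x - y)"
proof -
  have "\<forall>i. \<exists>B\<ge>0. \<forall>x\<in>K. \<forall>y\<in>K. \<bar>vf \<sigma> a x $ i - vf \<sigma> a y $ i\<bar> \<le> B * norm (x - y)"
    using lip_real[OF vf_comp_diff vf_grad_cont assms] by blast
  then obtain B where B: "\<And>i. B i \<ge> 0" "\<And>i x y. x \<in> K \<Longrightarrow> y \<in> K \<Longrightarrow> \<bar>vf \<sigma> a x $ i - vf \<sigma> a y $ i\<bar> \<le> B i * norm (x - y)"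
    by metis
  show ?thesis
  proof (intro exI conjI ballI)
    show "0 \<le> sum B UNIV" using B(1) by (simp add: sum_nonneg)
    fix x y assume "x \<in> K" "y \<in> K"
    have "norm (vf \<sigma> a x - vf \<sigma> a y) \<le> (\<Sum>i\<in>UNIV. \<bar>(vf \<sigma> a x - vf \<sigma> a y) $ i\<bar>)"
      by (rule norm_le_l1_cart)
    also have "\<dots> \<le> (\<Sum>i\<in>UNIV. B i * norm (x - y))"
      using B(2)[OF \<open>x \<in> K\<close> \<open>y \<in> K\<close>] by (intro sum_mono) simp
    also have "\<dots> = sum B UNIV * norm (x - y)" by (simp add: sum_distrib_right)
    finally show "norm (vf \<sigma> a x - vf \<sigma> a y) \<le> sum B UNIV * norm (x - y)" .
  qed
qed

end

lemma ext_field: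
  fixes f :: "'a::euclidean_space \<Rightarrow> 'a"
  assumes K: "convex K" "closed K" "K \<noteq> {}"
    and lip: "\<forall>x\<in>K. \<forall>y\<in>K. norm (f x - f y) \<le> L * norm (x - y)" and L: "0 \<le> L"
    and bnd: "\<forall>x\<in>K. norm (f x) \<le> M" and fc: "continuous_on K f"
  shows "\<And>x y. norm (f (closest_point K x) - f (closest_point K y)) \<le> L * norm (x - y)"
    and "\<And>x. norm (f (closest_point K x)) \<le> M"
    and "continuous_on UNIV (\<lambda>x. f (closest_point K x))"
proof -
  have cK: "closest_point K x \<in> K" for x using closest_point_exists(1)[OF K(2,3)] .
  fix x y
  show "norm (f (closest_point K x) - f (closest_point K y)) \<le> L * norm (x - y)"
    using lip cK closest_point_lipschitz[OF K, of x y] L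
    by (metis (no_types, lifting) dist_norm mult_left_mono order_trans)
  show "norm (f (closest_point K x)) \<le> M" using bnd cK by blast
next
  show "continuous_on UNIV (\<lambda>x. f (closest_point K x))"
    by (rule continuous_on_compose2[OF fc continuous_on_closest_point[OF K]])
       (use closest_point_exists(1)[OF K(2,3)] in auto)
qed

lemma lin_est:
  fixes y :: "real \<Rightarrow> 'a::euclidean_space"
  assumes s: "0 \<le> s" and der: "\<And>r. r \<in> {0..s} \<Longrightarrow> (y has_vector_derivative y' r) (at r within {0..s})"
    and B: "\<And>r. r \<in> {0..s} \<Longrightarrow> norm (y' r - y' 0) \<le> B"
  shows "norm (y s - y 0 - s *\<^sub>R y' 0) \<le> s * B"
proof -
  have "norm (y s - y 0 - (s - 0) *\<^sub>R y' 0) \<le> norm (s - 0) * B"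
    by (rule vector_differentiable_bound_linearization[where S="{0..s}"])
       (use der B s in \<open>auto simp: closed_segment_eq_real_ivl\<close>)
  then show ?thesis using s by simp
qed

lemma int_bound:
  fixes f :: "real \<Rightarrow> 'a::euclidean_space"
  assumes "(f has_integral i) {0..t}" "\<And>r. r \<in> {0..t} \<Longrightarrow> norm (f r) \<le> M" "0 \<le> t" "0 \<le> M"
  shows "norm i \<le> M * t"
  using has_integral_bound[of M f i 0 t] assms by auto

lemma phase:
  fixes y :: "real \<Rightarrow> 'a::euclidean_space" and Dh :: "'a \<Rightarrow> 'a"
  assumes s: "0 \<le> s" and der: "\<And>r. r \<in> {0..s} \<Longrightarrow> (y has_vector_derivative h (y r)) (at r within {0..s})"
    and lin: "linear Dh" and DB: "\<And>e. norm (Dh e) \<le> B * norm e"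
    and loc: "\<And>r. r \<in> {0..s} \<Longrightarrow> norm (h (y r) - h xb - Dh (y r - xb)) \<le> E"
    and quad: "\<And>r. r \<in> {0..s} \<Longrightarrow> norm (y r - y 0 - r *\<^sub>R h (y 0)) \<le> C * r^2"
    and hp: "norm (h (y 0) - h xb) \<le> P"
    and nn: "0 \<le> B" "0 \<le> C" "0 \<le> P"
  shows "norm (y s - y 0 - s *\<^sub>R h xb - s *\<^sub>R Dh (y 0 - xb) - (s^2/2) *\<^sub>R Dh (h xb))
           \<le> 3 * s * (E + B * (C * s^2 + s * P))"
proof -
  define p where "p = y 0"
  define z where "z r = y r - r *\<^sub>R h xb - r *\<^sub>R Dh (p - xb) - (r^2/2) *\<^sub>R Dh (h xb)" for r
  define z' where "z' r = h (y r) - h xb - Dh (p - xb) - r *\<^sub>R Dh (h xb)" for r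
  define Bd where "Bd = E + B * (C * s^2 + s * P)"
  have zder: "(z has_vector_derivative z' r) (at r within {0..s})" if "r \<in> {0..s}" for r
    unfolding z_def z'_def
    by (rule derivative_eq_intros der[OF that] | simp)+
  have zb: "norm (z' r) \<le> Bd" if r: "r \<in> {0..s}" for r
  proof -
    have "z' r = (h (y r) - h xb - Dh (y r - xb)) + Dh ((y r - p - r *\<^sub>R h p) + r *\<^sub>R (h p - h xb))"
      unfolding z'_def using lin
      by (simp add: linear_diff linear_add linear_scale algebra_simps)
    also have "norm \<dots> \<le> E + B * (C * s^2 + s * P)"
    proof -
      have a: "norm (y r - p - r *\<^sub>R h p) \<le> C * s^2"
        using quad[OF r] r nn unfolding p_def
        by (smt (verit) atLeastAtMost_iff mult_left_mono power_mono)
      have b: "norm (r *\<^sub>R (h p - h xb)) \<le> s * P"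
        using hp r nn unfolding p_def by (simp add: mult_mono)
      have "norm (Dh ((y r - p - r *\<^sub>R h p) + r *\<^sub>R (h p - h xb))) \<le> B * norm ((y r - p - r *\<^sub>R h p) + r *\<^sub>R (h p - h xb))"
        by (rule DB)
      also have "\<dots> \<le> B * (C * s^2 + s * P)"
        using a b nn norm_triangle_ineq[of "y r - p - r *\<^sub>R h p" "r *\<^sub>R (h p - h xb)"]
        by (intro mult_left_mono) auto
      finally show ?thesis using loc[OF r] norm_triangle_ineq by (smt (verit))
    qed
    finally show ?thesis unfolding Bd_def .
  qed
  have "norm (z s - z 0 - s *\<^sub>R z' 0) \<le> s * (2 * Bd)"
  proof (rule lin_est[OF s zder])
    fix r assume "r \<in> {0..s}"
    then show "norm (z' r - z' 0) \<le> 2 * Bd"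
      using zb[of r] zb[of 0] s norm_triangle_ineq4[of "z' r" "z' 0"] by auto
  qed
  moreover have "norm (s *\<^sub>R z' 0) \<le> s * Bd" using zb[of 0] s by (simp add: mult_left_mono)
  ultimately have "norm (z s - z 0) \<le> 3 * s * Bd"
    using norm_triangle_ineq[of "z s - z 0 - s *\<^sub>R z' 0" "s *\<^sub>R z' 0"] by simp
  moreover have "z s - z 0 = y s - y 0 - s *\<^sub>R h xb - s *\<^sub>R Dh (y 0 - xb) - (s^2/2) *\<^sub>R Dh (h xb)"
    unfolding z_def p_def by simp
  ultimately show ?thesis unfolding Bd_def by simp
qed

lemma hess_jac: "jac (grad u) x = transpose (hess u x)"
  by (simp add: jac_def grad_def hess_def transpose_def)

lemma taylor2:
  fixes u :: "real^'n \<Rightarrow> real"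
  assumes ud: "\<And>x. u differentiable (at x)" and gd: "\<And>j. partial j u differentiable (at xb)"
    and e: "0 < \<epsilon>"
  shows "\<exists>\<delta>>0. \<forall>d. norm d < \<delta> \<longrightarrow>
     \<bar>u (xb + d) - u xb - grad u xb \<bullet> d - (1/2) * ((hess u xb *v d) \<bullet> d)\<bar> \<le> 2 * \<epsilon> * (norm d)^2"
proof -
  define G where "G = grad u"
  define J where "J = jac G xb"
  have Gd: "(G has_derivative (\<lambda>h. J *v h)) (at xb)"
    unfolding J_def G_def by (rule jac_has_derivative) (simp add: grad_def gd)
  obtain \<delta> where \<delta>: "\<delta> > 0" "\<And>y. norm (y - xb) < \<delta> \<Longrightarrow> norm (G y - G xb - J *v (y - xb)) \<le> \<epsilon> * norm (y - xb)"
    using Gd[unfolded has_derivative_at_alt] e by blast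
  have JH: "(J *v d) \<bullet> d = (hess u xb *v d) \<bullet> d" for d
  proof -
    have "(J *v d) \<bullet> d = d \<bullet> (hess u xb *v d)"
      unfolding J_def G_def hess_jac by (simp add: dot_lmul_matrix)
    then show ?thesis by (simp add: inner_commute)
  qed
  show ?thesis
  proof (intro exI conjI allI impI)
    show "\<delta> > 0" by fact
    fix d :: "real^'n" assume d: "norm d < \<delta>"
    define \<psi> where "\<psi> \<tau> = u (xb + \<tau> *\<^sub>R d) - \<tau> * (G xb \<bullet> d) - (\<tau>^2/2) * ((J *v d) \<bullet> d)" for \<tau>
    define \<psi>' where "\<psi>' \<tau> = (G (xb + \<tau> *\<^sub>R d) - G xb - J *v (\<tau> *\<^sub>R d)) \<bullet> d" for \<tau>
    have uder: "((\<lambda>\<tau>. u (xb + \<tau> *\<^sub>R d)) has_vector_derivative (G (xb + \<tau> *\<^sub>R d) \<bullet> d)) (at \<tau> within S)" for \<tau> S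
    proof -
      have "((\<lambda>\<tau>. xb + \<tau> *\<^sub>R d) has_derivative (\<lambda>t. t *\<^sub>R d)) (at \<tau> within S)"
        by (intro derivative_eq_intros) auto
      from has_derivative_compose[OF this grad_has_derivative[OF ud]]
      show ?thesis unfolding has_vector_derivative_def G_def by (simp add: inner_scaleR_right)
    qed
    have \<psi>der: "(\<psi> has_vector_derivative \<psi>' \<tau>) (at \<tau> within {0..1})" if "\<tau> \<in> {0..1}" for \<tau>
    proof -
      have "(\<psi> has_real_derivative (G (xb + \<tau> *\<^sub>R d) \<bullet> d - G xb \<bullet> d - \<tau> * ((J *v d) \<bullet> d))) (at \<tau> within {0..1})"
        unfolding \<psi>_def
        by (rule derivative_eq_intros uder[unfolded has_real_derivative_iff_has_vector_derivative[symmetric]] | simp)+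
      then have "(\<psi> has_vector_derivative (G (xb + \<tau> *\<^sub>R d) \<bullet> d - G xb \<bullet> d - \<tau> * ((J *v d) \<bullet> d))) (at \<tau> within {0..1})"
        by (simp add: has_real_derivative_iff_has_vector_derivative)
      moreover have "G (xb + \<tau> *\<^sub>R d) \<bullet> d - G xb \<bullet> d - \<tau> * ((J *v d) \<bullet> d) = \<psi>' \<tau>"
        unfolding \<psi>'_def by (simp add: inner_diff_left matrix_vector_mult_scaleR)
      ultimately show ?thesis by simp
    qed
    have \<psi>b: "norm (\<psi>' \<tau>) \<le> \<epsilon> * (norm d)^2" if t: "\<tau> \<in> {0..1}" for \<tau>
    proof -
      have n: "norm (\<tau> *\<^sub>R d) \<le> norm d" using t by (simp add: mult_left_le_one_le)
      then have "norm (G (xb + \<tau> *\<^sub>R d) - G xb - J *v (\<tau> *\<^sub>R d)) \<le> \<epsilon> * norm (\<tau> *\<^sub>R d)"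
        using \<delta>(2)[of "xb + \<tau> *\<^sub>R d"] d by simp
      also have "\<dots> \<le> \<epsilon> * norm d" using n e by (simp add: mult_left_mono)
      finally have "norm (\<psi>' \<tau>) \<le> \<epsilon> * norm d * norm d"
        unfolding \<psi>'_def using Cauchy_Schwarz_ineq2
        by (smt (verit, ccfv_SIG) mult_right_mono norm_ge_zero real_norm_def)
      then show ?thesis by (simp add: power2_eq_square mult.assoc)
    qed
    have "norm (\<psi> 1 - \<psi> 0 - 1 *\<^sub>R \<psi>' 0) \<le> 1 * (2 * (\<epsilon> * (norm d)^2))"
    proof (rule lin_est[OF _ \<psi>der])
      fix r :: real assume "r \<in> {0..1}"
      then show "norm (\<psi>' r - \<psi>' 0) \<le> 2 * (\<epsilon> * (norm d)^2)"
        using \<psi>b[of r] \<psi>b[of 0] norm_triangle_ineq4[of "\<psi>' r" "\<psi>' 0"] by auto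
    qed auto
    moreover have "\<psi>' 0 = 0" unfolding \<psi>'_def by simp
    moreover have "\<psi> 1 - \<psi> 0 = u (xb + d) - u xb - grad u xb \<bullet> d - (1/2) * ((hess u xb *v d) \<bullet> d)"
      unfolding \<psi>_def G_def using JH by simp
    ultimately show "\<bar>u (xb + d) - u xb - grad u xb \<bullet> d - (1/2) * ((hess u xb *v d) \<bullet> d)\<bar> \<le> 2 * \<epsilon> * (norm d)^2"
      by simp
  qed
qed

lemma flow_props:
  fixes xb :: "'a::euclidean_space" and f :: "'a \<Rightarrow> 'a" and Y :: "'a \<Rightarrow> real \<Rightarrow> 'a"
  defines "K \<equiv> cball xb 1"
  assumes Y: "\<forall>x0. Y x0 0 = x0 \<and>
     (\<forall>t\<in>{0..T}. (Y x0 has_vector_derivative f (closest_point K (Y x0 t))) (at t within {0..T})) \<and>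
     (\<forall>t\<in>{0..T}. ((\<lambda>r. f (closest_point K (Y x0 r))) has_integral (Y x0 t - x0)) {0..t}) \<and>
     continuous_on {0..T} (Y x0) \<and>
     (\<forall>z0. \<forall>t\<in>{0..T}. norm (Y x0 t - Y z0 t) \<le> 2 * norm (x0 - z0))"
    and bnd: "\<forall>x\<in>K. norm (f x) \<le> M" and lip: "\<forall>x\<in>K. \<forall>y\<in>K. norm (f x - f y) \<le> L * norm (x - y)"
    and L: "0 \<le> L" and M: "0 \<le> M" and MT: "M * T \<le> 1/4"
    and x0: "norm (x0 - xb) \<le> 3/4" and t: "t \<in> {0..T}"
  shows "norm (Y x0 t - x0) \<le> M * t"
    and "Y x0 t \<in> K"
    and "(Y x0 has_vector_derivative f (Y x0 t)) (at t within {0..T})"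
    and "((\<lambda>r. f (Y x0 r)) has_integral (Y x0 t - x0)) {0..t}"
    and "norm (Y x0 t - x0 - t *\<^sub>R f x0) \<le> L * M * t^2"
proof -
  have K: "convex K" "closed K" "K \<noteq> {}" unfolding K_def by auto
  have cK: "closest_point K x \<in> K" for x using closest_point_exists(1)[OF K(2,3)] .
  have bnd': "norm (f (closest_point K x)) \<le> M" for x using bnd cK by blast
  have T: "0 \<le> T" using t by auto
  have gen1: "norm (Y x0 t' - x0) \<le> M * t'" if t': "t' \<in> {0..T}" for t'
    by (rule int_bound[OF Y[rule_format, THEN conjunct2, THEN conjunct2, THEN conjunct1, rule_format, OF t'] bnd'])
       (use t' M in auto)
  have gen2: "Y x0 t' \<in> K" if t': "t' \<in> {0..T}" for t'
  proof -
    have "M * t' \<le> 1/4" using MT t' M by (smt (verit) atLeastAtMost_iff mult_left_mono)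
    then have "norm (Y x0 t' - xb) \<le> 1"
      using gen1[OF t'] x0 norm_triangle_ineq[of "Y x0 t' - x0" "x0 - xb"] by simp
    then show ?thesis unfolding K_def by (simp add: dist_norm norm_minus_commute)
  qed
  have cpY: "closest_point K (Y x0 t') = Y x0 t'" if "t' \<in> {0..T}" for t'
    using closest_point_self[OF gen2[OF that]] .
  show "norm (Y x0 t - x0) \<le> M * t" using gen1[OF t] .
  show "Y x0 t \<in> K" using gen2[OF t] .
  have gen3: "(Y x0 has_vector_derivative f (Y x0 t')) (at t' within {0..T})" if t': "t' \<in> {0..T}" for t'
  proof -
    have "(Y x0 has_vector_derivative f (closest_point K (Y x0 t'))) (at t' within {0..T})"
      using Y t' by blast
    then show ?thesis using cpY[OF t'] by simp
  qed
  show "(Y x0 has_vector_derivative f (Y x0 t)) (at t within {0..T})" using gen3[OF t] .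
  show "((\<lambda>r. f (Y x0 r)) has_integral (Y x0 t - x0)) {0..t}"
  proof -
    have H: "((\<lambda>r. f (closest_point K (Y x0 r))) has_integral (Y x0 t - x0)) {0..t}" using Y t by blast
    show ?thesis
    proof (rule has_integral_spike_finite[OF finite.emptyI _ H])
      fix r assume "r \<in> {0..t} - {}"
      then show "f (Y x0 r) = f (closest_point K (Y x0 r))" using cpY t by auto
    qed
  qed
  show "norm (Y x0 t - x0 - t *\<^sub>R f x0) \<le> L * M * t^2"
  proof -
    have x0K: "x0 \<in> K" using x0 unfolding K_def by (simp add: dist_norm norm_minus_commute)
    have "norm (Y x0 t - Y x0 0 - t *\<^sub>R f (Y x0 0)) \<le> t * (L * M * t)"
    proof (rule lin_est)
      show "0 \<le> t" using t by simp
      fix r assume r: "r \<in> {0..t}"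
      then have rT: "r \<in> {0..T}" using t by auto
      show "(Y x0 has_vector_derivative f (Y x0 r)) (at r within {0..t})"
        using gen3[OF rT] has_vector_derivative_within_subset[of _ _ _ "{0..T}" "{0..t}"] t by auto
      have "norm (f (Y x0 r) - f (Y x0 0)) \<le> L * norm (Y x0 r - x0)"
        using lip gen2[OF rT] x0K Y by auto
      also have "\<dots> \<le> L * (M * r)" using gen1[OF rT] L by (simp add: mult_left_mono)
      also have "\<dots> \<le> L * M * t" using r L M by (simp add: mult_left_mono mult.assoc)
      finally show "norm (f (Y x0 r) - f (Y x0 0)) \<le> L * M * t" .
    qed
    then show ?thesis using Y by (simp add: power2_eq_square mult_ac)
  qed
qed

lemma step_admissible:
  fixes a1 a2 :: "real^'m"
  assumes "norm a1 \<le> 1" "norm a2 \<le> 1"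
  shows "admissible (\<lambda>r. if r < s then a1 else a2)"
  unfolding admissible_def piecewise_continuous_def
proof (intro conjI allI impI)
  fix t :: real show "norm (if t < s then a1 else a2) \<le> 1" using assms by auto
next
  fix T :: real assume "T > 0"
  define a where "a = (\<lambda>r::real. if r < s then a1 else a2)"
  show "\<exists>S. finite S \<and> S \<subseteq> {0..T} \<and> continuous_on ({0..T} - S) a \<and>
        (\<forall>s\<in>S. (s > 0 \<longrightarrow> (\<exists>l. (a \<longlongrightarrow> l) (at_left s))) \<and> (\<exists>r. (a \<longlongrightarrow> r) (at_right s)))"
  proof -
    have c: "continuous_on ({0..T} - {s} \<inter> {0..T}) a"
    proof (rule continuous_at_imp_continuous_on, intro ballI)
      fix x assume "x \<in> {0..T} - {s} \<inter> {0..T}"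
      then have "x \<noteq> s" by auto
      then consider "x < s" | "x > s" by linarith
      then show "isCont a x"
      proof cases
        case 1
        have "eventually (\<lambda>y. y \<in> {..<s}) (nhds x)" by (rule eventually_nhds_in_open) (use 1 in auto)
        then have "eventually (\<lambda>y. a y = a1) (nhds x)" by eventually_elim (simp add: a_def)
        from isCont_cong[OF this] show ?thesis by simp
      next
        case 2
        have "eventually (\<lambda>y. y \<in> {s<..}) (nhds x)" by (rule eventually_nhds_in_open) (use 2 in auto)
        then have "eventually (\<lambda>y. a y = a2) (nhds x)" by eventually_elim (simp add: a_def)
        from isCont_cong[OF this] show ?thesis by simp
      qed
    qed
    have "eventually (\<lambda>y. y \<in> {s - 1<..<s}) (at_left s)" by (rule eventually_at_left_real) simp
    then have ev1: "eventually (\<lambda>y. a y = a1) (at_left s)" by eventually_elim (auto simp: a_def)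
    have l: "(a \<longlongrightarrow> a1) (at_left s)" using tendsto_eventually[OF ev1] by simp
    have "eventually (\<lambda>y. y \<in> {s<..<s+1}) (at_right s)" by (rule eventually_at_right_real) simp
    then have ev2: "eventually (\<lambda>y. a y = a2) (at_right s)" by eventually_elim (auto simp: a_def)
    have r: "(a \<longlongrightarrow> a2) (at_right s)" using tendsto_eventually[OF ev2] by simp
    show ?thesis
      by (rule exI[of _ "{s} \<inter> {0..T}"]) (use c l r in auto)
  qed
qed

lemma shift_int:
  fixes f :: "real \<Rightarrow> 'a::euclidean_space"
  assumes "(f has_integral i) (cbox 0 (t - s))"
  shows "((\<lambda>x. f (x - s)) has_integral i) {s..t}"
  using has_integral_affinity'[OF assms, of 1 "-s"] by simp

lemma traj_build:
  fixes \<sigma> :: "real^'n \<Rightarrow> real^'m^'n" and a1 a2 :: "real^'m"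
  assumes s: "0 < s"
    and Y1: "Y1 0 = x" "\<And>t. t \<in> {0..s} \<Longrightarrow> ((\<lambda>r. \<sigma> (Y1 r) *v a1) has_integral (Y1 t - x)) {0..t}"
    and Y2: "Y2 0 = Y1 s" "\<And>t. t \<in> {0..s} \<Longrightarrow> ((\<lambda>r. \<sigma> (Y2 r) *v a2) has_integral (Y2 t - Y1 s)) {0..t}"
  shows "trajectory \<sigma> (\<lambda>r. if r < s then a1 else a2) x (2 * s) (\<lambda>r. if r \<le> s then Y1 r else Y2 (r - s))"
    and "(\<lambda>r. if r \<le> s then Y1 r else Y2 (r - s)) (2 * s) = Y2 s"
proof -
  define a where "a = (\<lambda>r::real. if r < s then a1 else a2)"
  define X where "X = (\<lambda>r. if r \<le> s then Y1 r else Y2 (r - s))"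
  have part1: "((\<lambda>r. \<sigma> (X r) *v a r) has_integral (Y1 t - x)) {0..t}" if t: "t \<in> {0..s}" for t
  proof (rule has_integral_spike_finite[of "{s}", OF _ _ Y1(2)[OF t]])
    fix r assume "r \<in> {0..t} - {s}"
    then show "\<sigma> (X r) *v a r = \<sigma> (Y1 r) *v a1" using t by (auto simp: X_def a_def)
  qed simp
  have part2: "((\<lambda>r. \<sigma> (X r) *v a r) has_integral (Y2 (t - s) - Y1 s)) {s..t}" if t: "t \<in> {s..2 * s}" for t
  proof -
    have "((\<lambda>r. \<sigma> (Y2 r) *v a2) has_integral (Y2 (t - s) - Y1 s)) (cbox 0 (t - s))"
      using Y2(2)[of "t - s"] t by auto
    from shift_int[OF this]
    have "((\<lambda>r. \<sigma> (Y2 (r - s)) *v a2) has_integral (Y2 (t - s) - Y1 s)) {s..t}" .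
    then show ?thesis
    proof (rule has_integral_spike_finite[of "{}", rotated 2])
      fix r assume "r \<in> {s..t} - {}"
      then show "\<sigma> (X r) *v a r = \<sigma> (Y2 (r - s)) *v a2"
        using Y2(1) by (auto simp: X_def a_def)
    qed simp
  qed
  show "trajectory \<sigma> a x (2 * s) X"
    unfolding trajectory_def
  proof (intro conjI ballI)
    show "X 0 = x" using s Y1(1) by (simp add: X_def)
    fix t assume t: "t \<in> {0..2 * s}"
    show "((\<lambda>r. \<sigma> (X r) *v a r) has_integral (X t - x)) {0..t}"
    proof (cases "t \<le> s")
      case True
      then show ?thesis using part1[of t] t by (simp add: X_def)
    next
      case False
      have "((\<lambda>r. \<sigma> (X r) *v a r) has_integral ((Y1 s - x) + (Y2 (t - s) - Y1 s))) {0..t}"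
        by (rule has_integral_combine[of 0 s t]) (use False s t part1[of s] part2[of t] in auto)
      then show ?thesis using False by (simp add: X_def)
    qed
  qed
  show "X (2 * s) = Y2 s" using s by (simp add: X_def)
qed

lemma mat_bound: "\<exists>B\<ge>0. \<forall>h. norm ((A::real^'n^'n) *v h) \<le> B * norm h"
  using bounded_linear.nonneg_bounded[OF matrix_vector_mul_bounded_linear[of A]]
  by (metis mult.commute)

lemma vec_times2: "(x::real^'n) * 2 = 2 *\<^sub>R x"
  by (simp add: vec_eq_iff)

lemma orth_v:
  assumes "\<forall>i. grad u xb \<bullet> column i (\<sigma> xb) = 0"
  shows "grad u xb \<bullet> ((\<sigma> xb :: real^'m^'n) *v a) = 0"
  unfolding matrix_mult_sum using assms by (simp add: inner_sum_right scalar_mult_eq_scaleR)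

lemma jac_vf_add:
  fixes \<sigma> :: "real^'n \<Rightarrow> real^'m^'n"
  assumes sigma_C2: "\<forall>i j. Ck 2 (\<lambda>x. \<sigma> x $ i $ j)"
  shows "jac (vf \<sigma> (a + b)) x = jac (vf \<sigma> a) x + jac (vf \<sigma> b) x"
proof -
  have "partial j (\<lambda>y. vf \<sigma> (a + b) y $ i) x = partial j (\<lambda>y. vf \<sigma> a y $ i) x + partial j (\<lambda>y. vf \<sigma> b y $ i) x" for i j
  proof -
    have e: "(\<lambda>y. vf \<sigma> (a + b) y $ i) = (\<lambda>y. vf \<sigma> a y $ i + vf \<sigma> b y $ i)"
      by (simp add: vf_def matrix_vector_right_distrib)
    show ?thesis unfolding e
      using partial_eq[OF has_derivative_add[OF grad_has_derivative grad_has_derivative], OF vf_comp_diff[OF sigma_C2] vf_comp_diff[OF sigma_C2]]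
      by (simp add: inner_axis grad_def)
  qed
  then show ?thesis by (simp add: jac_def vec_eq_iff)
qed

theorem theorem1:
  fixes \<sigma> :: "real^'n \<Rightarrow> real^'m^'n" and u :: "real^'n \<Rightarrow> real" and xb :: "real^'n"
  assumes sigma_C2: "\<forall>i j. Ck 2 (\<lambda>x. \<sigma> x $ i $ j)"
    and u_C3: "Ck 3 u"
    and orth: "\<forall>i. grad u xb \<bullet> column i (\<sigma> xb) = 0"
    and pos: "\<exists>a1 a2. norm a1 \<le> 1 \<and> norm a2 \<le> 1 \<and>
       (let v = \<sigma> xb *v (a1 + a2) in
         - ((hess u xb *v v) \<bullet> v)
         - ((jac (vf \<sigma> (a1 + a2)) xb *v v + lie_bracket (vf \<sigma> a1) (vf \<sigma> a2) xb) \<bullet> grad u xb)) > 0"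
  shows "STLA \<sigma> {x. u x \<le> u xb} xb"
proof -
  from pos obtain a1 a2 where a12: "norm a1 \<le> 1" "norm a2 \<le> 1" and
    Qp: "- ((hess u xb *v (\<sigma> xb *v (a1 + a2))) \<bullet> (\<sigma> xb *v (a1 + a2)))
         - ((jac (vf \<sigma> (a1 + a2)) xb *v (\<sigma> xb *v (a1 + a2)) + lie_bracket (vf \<sigma> a1) (vf \<sigma> a2) xb) \<bullet> grad u xb) > 0"
    by (auto simp: Let_def)
  define f where "f = vf \<sigma> a1"
  define g where "g = vf \<sigma> a2"
  define K where "K = cball xb (1::real)"
  have Kc: "compact K" "convex K" "closed K" "K \<noteq> {}" unfolding K_def by auto
  obtain Lf where Lf: "Lf \<ge> 0" "\<forall>x\<in>K. \<forall>y\<in>K. norm (f x - f y) \<le> Lf * norm (x - y)"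
    using vf_lip[OF sigma_C2 Kc(1,2)] unfolding f_def by blast
  obtain Lg where Lg: "Lg \<ge> 0" "\<forall>x\<in>K. \<forall>y\<in>K. norm (g x - g y) \<le> Lg * norm (x - y)"
    using vf_lip[OF sigma_C2 Kc(1,2)] unfolding g_def by blast
  have fc: "continuous_on S f" for S unfolding f_def by (rule vf_cont[OF sigma_C2])
  have gc: "continuous_on S g" for S unfolding g_def by (rule vf_cont[OF sigma_C2])
  obtain Mf where Mf: "\<And>x. x \<in> K \<Longrightarrow> norm (f x) \<le> Mf"
    using continuous_on_compact_bound[OF Kc(1) fc] by blast
  obtain Mg where Mg: "\<And>x. x \<in> K \<Longrightarrow> norm (g x) \<le> Mg"
    using continuous_on_compact_bound[OF Kc(1) gc] by blast
  define L where "L = max Lf Lg"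
  define M where "M = max (max Mf Mg) 1"
  have L0: "0 \<le> L" and M1: "1 \<le> M" unfolding L_def M_def using Lf by (auto simp: le_max_iff_disj)
  have lipf: "\<forall>x\<in>K. \<forall>y\<in>K. norm (f x - f y) \<le> L * norm (x - y)"
    using Lf(2) unfolding L_def by (smt (verit, best) mult_right_mono norm_ge_zero)
  have lipg: "\<forall>x\<in>K. \<forall>y\<in>K. norm (g x - g y) \<le> L * norm (x - y)"
    using Lg(2) unfolding L_def by (smt (verit, best) mult_right_mono norm_ge_zero)
  have bndf: "\<forall>x\<in>K. norm (f x) \<le> M" using Mf unfolding M_def by force
  have bndg: "\<forall>x\<in>K. norm (g x) \<le> M" using Mg unfolding M_def by force
  define T where "T = min (1 / (2 * (L + 1))) (1 / (4 * M))"
  have T0: "0 < T" unfolding T_def using L0 M1 by auto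
  have LT: "L * T \<le> 1/2"
  proof -
    have "L * T \<le> (L + 1) * (1 / (2 * (L + 1)))"
      unfolding T_def using L0 M1 by (intro mult_mono) auto
    also have "\<dots> = 1/2" using L0 by (simp add: field_simps)
    finally show ?thesis .
  qed
  have MT: "M * T \<le> 1/4"
  proof -
    have "M * T \<le> M * (1 / (4 * M))" unfolding T_def using M1 by (intro mult_left_mono) auto
    also have "\<dots> = 1/4" using M1 by (simp add: field_simps)
    finally show ?thesis .
  qed
  have M0: "0 \<le> M" using M1 by simp
  note extf = ext_field[OF Kc(2,3,4) lipf L0 bndf fc]
  note extg = ext_field[OF Kc(2,3,4) lipg L0 bndg gc]
  obtain Yf where Yf: "\<forall>x0. Yf x0 0 = x0 \<and>
     (\<forall>t\<in>{0..T}. (Yf x0 has_vector_derivative f (closest_point K (Yf x0 t))) (at t within {0..T})) \<and>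
     (\<forall>t\<in>{0..T}. ((\<lambda>r. f (closest_point K (Yf x0 r))) has_integral (Yf x0 t - x0)) {0..t}) \<and>
     continuous_on {0..T} (Yf x0) \<and>
     (\<forall>z0. \<forall>t\<in>{0..T}. norm (Yf x0 t - Yf z0 t) \<le> 2 * norm (x0 - z0))"
    using ode_exists[OF extf T0 L0 LT] by blast
  obtain Yg where Yg: "\<forall>x0. Yg x0 0 = x0 \<and>
     (\<forall>t\<in>{0..T}. (Yg x0 has_vector_derivative g (closest_point K (Yg x0 t))) (at t within {0..T})) \<and>
     (\<forall>t\<in>{0..T}. ((\<lambda>r. g (closest_point K (Yg x0 r))) has_integral (Yg x0 t - x0)) {0..t}) \<and>
     continuous_on {0..T} (Yg x0) \<and>
     (\<forall>z0. \<forall>t\<in>{0..T}. norm (Yg x0 t - Yg z0 t) \<le> 2 * norm (x0 - z0))"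
    using ode_exists[OF extg T0 L0 LT] by blast
  note Pf = flow_props[OF Yf[unfolded K_def] bndf[unfolded K_def] lipf[unfolded K_def] L0 M0 MT]
  note Pg = flow_props[OF Yg[unfolded K_def] bndg[unfolded K_def] lipg[unfolded K_def] L0 M0 MT]
  have ud: "\<And>x. u differentiable (at x)" using Ck3_D[OF u_C3] by blast
  have key: "\<exists>s. 0 < s \<and> s \<le> T \<and> 2 * s < t0 \<and> u (Yg (Yf xb s) s) < u xb" if t0: "0 < t0" for t0
  proof -
    define F where "F = f xb"
    define Gv where "Gv = g xb"
    define Jf where "Jf = jac f xb"
    define Jg where "Jg = jac g xb"
    define H where "H = hess u xb"
    define gu where "gu = grad u xb"
    define v where "v = F + Gv"
    define w where "w = (1/2) *\<^sub>R (Jf *v F) + Jg *v F + (1/2) *\<^sub>R (Jg *v Gv)"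
    define Q where "Q = - ((H *v v) \<bullet> v) - ((Jf *v v + Jg *v v + (Jg *v F - Jf *v Gv)) \<bullet> gu)"
    have sv: "\<sigma> xb *v (a1 + a2) = v"
      unfolding v_def F_def Gv_def f_def g_def vf_def by (simp add: matrix_vector_right_distrib)
    have Q0: "0 < Q"
    proof -
      have jj: "jac (vf \<sigma> (a1 + a2)) xb = Jf + Jg"
        unfolding Jf_def Jg_def f_def g_def by (rule jac_vf_add[OF sigma_C2])
      have lb: "lie_bracket (vf \<sigma> a1) (vf \<sigma> a2) xb = Jg *v F - Jf *v Gv"
        unfolding lie_bracket_def Jf_def Jg_def F_def Gv_def f_def g_def vf_def ..
      show ?thesis using Qp unfolding sv jj lb Q_def H_def gu_def
        by (simp add: matrix_vector_mult_add_rdistrib)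
    qed
    have gv0: "gu \<bullet> v = 0" using orth_v[of u xb \<sigma> "a1 + a2", OF orth] sv unfolding gu_def by simp
    have Qid: "gu \<bullet> w + (1/2) * ((H *v v) \<bullet> v) = - Q / 2"
      unfolding Q_def w_def v_def
      by (simp add: algebra_simps inner_add_left inner_add_right inner_diff_left inner_diff_right inner_commute vec_times2)
    obtain BJf where BJf: "BJf \<ge> 0" "\<And>h. norm (Jf *v h) \<le> BJf * norm h" using mat_bound by blast
    obtain BJg where BJg: "BJg \<ge> 0" "\<And>h. norm (Jg *v h) \<le> BJg * norm h" using mat_bound by blast
    obtain BH where BH: "BH \<ge> 0" "\<And>h. norm (H *v h) \<le> BH * norm h" using mat_bound by blast
    define BJ where "BJ = max BJf BJg"
    have BJ0: "0 \<le> BJ" unfolding BJ_def using BJf by simp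
    have BJfb: "norm (Jf *v h) \<le> BJ * norm h" for h
      using BJf(2)[of h] unfolding BJ_def by (smt (verit) mult_right_mono norm_ge_zero)
    have BJgb: "norm (Jg *v h) \<le> BJ * norm h" for h
      using BJg(2)[of h] unfolding BJ_def by (smt (verit) mult_right_mono norm_ge_zero)
    define V where "V = norm v + norm w + 1"
    have V1: "1 \<le> V" unfolding V_def by simp
    define GU where "GU = norm gu"
    define \<eta> where "\<eta> = min 1 (Q / (8 * (GU + 1)))"
    have \<eta>0: "0 < \<eta>" "\<eta> \<le> 1" unfolding \<eta>_def GU_def using Q0
      by (auto intro!: divide_pos_pos add_nonneg_pos)
    have GU\<eta>: "GU * \<eta> \<le> Q / 8"
    proof -
      have "GU * \<eta> \<le> (GU + 1) * (Q / (8 * (GU + 1)))"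
        unfolding \<eta>_def GU_def using Q0 by (intro mult_mono) auto
      also have "\<dots> = Q / 8"
      proof -
        have "GU + 1 > 0" unfolding GU_def by (simp add: add_nonneg_pos)
        then show ?thesis by (simp add: field_simps)
      qed
      finally show ?thesis .
    qed
    define \<epsilon>' where "\<epsilon>' = Q / (16 * V^2)"
    have \<epsilon>'0: "0 < \<epsilon>'" unfolding \<epsilon>'_def using Q0 V1 by simp
    have gd: "\<And>j. partial j u differentiable (at xb)" using Ck3_D[OF u_C3] by blast
    obtain \<delta>' where \<delta>': "\<delta>' > 0" "\<And>d. norm d < \<delta>' \<Longrightarrow>
       \<bar>u (xb + d) - u xb - gu \<bullet> d - (1/2) * ((H *v d) \<bullet> d)\<bar> \<le> 2 * \<epsilon>' * (norm d)^2"
      using taylor2[OF ud gd \<epsilon>'0] unfolding gu_def H_def by blast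
    define \<epsilon> where "\<epsilon> = \<eta> / (18 * M)"
    have \<epsilon>0: "0 < \<epsilon>" unfolding \<epsilon>_def using \<eta>0 M1 by simp
    have fder: "(f has_derivative (\<lambda>h. Jf *v h)) (at xb)"
      unfolding f_def Jf_def by (rule vf_has_derivative[OF sigma_C2])
    have gder: "(g has_derivative (\<lambda>h. Jg *v h)) (at xb)"
      unfolding g_def Jg_def by (rule vf_has_derivative[OF sigma_C2])
    obtain \<delta>f where \<delta>f: "\<delta>f > 0" "\<And>y. norm (y - xb) < \<delta>f \<Longrightarrow> norm (f y - f xb - Jf *v (y - xb)) \<le> \<epsilon> * norm (y - xb)"
      using fder[unfolded has_derivative_at_alt] \<epsilon>0 by blast
    obtain \<delta>g where \<delta>g: "\<delta>g > 0" "\<And>y. norm (y - xb) < \<delta>g \<Longrightarrow> norm (g y - g xb - Jg *v (y - xb)) \<le> \<epsilon> * norm (y - xb)"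
      using gder[unfolded has_derivative_at_alt] \<epsilon>0 by blast
    define s where "s = min T (min 1 (min (t0/3) (min (\<eta> / (20 * (BJ * L * M + 1)))
       (min (\<delta>f / (4 * M)) (min (\<delta>g / (4 * M)) (min (\<delta>' / (2 * V)) (Q / (12 * (BH + 1) * V^2))))))))"
    have s0: "0 < s" unfolding s_def using T0 t0 \<eta>0 BJ0 L0 M1 \<delta>f \<delta>g \<delta>' V1 Q0 BH
      by (simp add: zero_less_mult_iff add_nonneg_pos)
    have sT: "s \<le> T" and s1: "s \<le> 1" and st0: "s \<le> t0/3"
      and s\<eta>: "s \<le> \<eta> / (20 * (BJ * L * M + 1))" and sf: "s \<le> \<delta>f / (4 * M)" and sg: "s \<le> \<delta>g / (4 * M)"
      and s\<delta>': "s \<le> \<delta>' / (2 * V)" and sQ: "s \<le> Q / (12 * (BH + 1) * V^2)"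
      unfolding s_def by linarith+
    have sTT: "s \<in> {0..T}" using s0 sT by simp
    have M0': "0 < M" using M1 by simp
    have Ms: "M * s \<le> 1/4" using MT sT M0 by (smt (verit) mult_left_mono)
    have Msf: "2 * (M * s) < \<delta>f"
    proof -
      have "M * s \<le> M * (\<delta>f / (4 * M))" using sf M0 by (rule mult_left_mono)
      also have "\<dots> = \<delta>f / 4" using M0' by simp
      finally show ?thesis using \<delta>f(1) by simp
    qed
    have Msg: "2 * (M * s) < \<delta>g"
    proof -
      have "M * s \<le> M * (\<delta>g / (4 * M))" using sg M0 by (rule mult_left_mono)
      also have "\<dots> = \<delta>g / 4" using M0' by simp
      finally show ?thesis using \<delta>g(1) by simp
    qed
    define y1 where "y1 = Yf xb"
    define p where "p = y1 s"
    define y2 where "y2 = Yg p"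
    have xb0: "norm (xb - xb) \<le> 3/4" by simp
    have y10: "y1 0 = xb" unfolding y1_def using Yf by blast
    have y20: "y2 0 = p" unfolding y2_def using Yg by blast
    have rT: "r \<in> {0..T}" if "r \<in> {0..s}" for r using that sT by auto
    have y1M: "norm (y1 r - xb) \<le> M * s" if r: "r \<in> {0..s}" for r
    proof -
      have "norm (y1 r - xb) \<le> M * r" unfolding y1_def using Pf(1)[OF xb0 rT[OF r]] .
      also have "\<dots> \<le> M * s" using r M0 by (simp add: mult_left_mono)
      finally show ?thesis .
    qed
    have pM: "norm (p - xb) \<le> M * s" unfolding p_def using y1M[of s] s0 by simp
    have p34: "norm (p - xb) \<le> 3/4" using pM Ms by simp
    have y2M: "norm (y2 r - xb) \<le> 2 * (M * s)" if r: "r \<in> {0..s}" for r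
    proof -
      have "norm (y2 r - p) \<le> M * r" unfolding y2_def using Pg(1)[OF p34 rT[OF r]] .
      also have "\<dots> \<le> M * s" using r M0 by (simp add: mult_left_mono)
      finally show ?thesis using pM norm_triangle_ineq[of "y2 r - p" "p - xb"] by simp
    qed
    have xbK: "xb \<in> K" unfolding K_def by simp
    have pK: "p \<in> K" unfolding K_def using p34 by (simp add: dist_norm norm_minus_commute)
    have der1: "(y1 has_vector_derivative f (y1 r)) (at r within {0..s})" if r: "r \<in> {0..s}" for r
      using has_vector_derivative_within_subset[OF Pf(3)[OF xb0 rT[OF r]], of "{0..s}"] sT
      unfolding y1_def by auto
    have der2: "(y2 has_vector_derivative g (y2 r)) (at r within {0..s})" if r: "r \<in> {0..s}" for r
      using has_vector_derivative_within_subset[OF Pg(3)[OF p34 rT[OF r]], of "{0..s}"] sT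
      unfolding y2_def by auto
    have ph1: "norm (y1 s - y1 0 - s *\<^sub>R f xb - s *\<^sub>R (Jf *v (y1 0 - xb)) - (s^2/2) *\<^sub>R (Jf *v f xb))
           \<le> 3 * s * (\<epsilon> * (M * s) + BJ * (L * M * s^2 + s * 0))"
    proof (rule phase[OF _ der1 matrix_vector_mul_linear BJfb])
      show "0 \<le> s" using s0 by simp
      fix r assume r: "r \<in> {0..s}"
      have "norm (f (y1 r) - f xb - Jf *v (y1 r - xb)) \<le> \<epsilon> * norm (y1 r - xb)"
        using \<delta>f(2) y1M[OF r] Msf M0 s0 by (smt (verit) mult_nonneg_nonneg)
      also have "\<dots> \<le> \<epsilon> * (M * s)" using y1M[OF r] \<epsilon>0 by (simp add: mult_left_mono)
      finally show "norm (f (y1 r) - f xb - Jf *v (y1 r - xb)) \<le> \<epsilon> * (M * s)" .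
      show "norm (y1 r - y1 0 - r *\<^sub>R f (y1 0)) \<le> L * M * r^2"
        using Pf(5)[OF xb0 rT[OF r]] unfolding y1_def using Yf by simp
    qed (use y10 BJ0 L0 M0 in auto)
    have ph2: "norm (y2 s - y2 0 - s *\<^sub>R g xb - s *\<^sub>R (Jg *v (y2 0 - xb)) - (s^2/2) *\<^sub>R (Jg *v g xb))
           \<le> 3 * s * (\<epsilon> * (2 * (M * s)) + BJ * (L * M * s^2 + s * (L * (M * s))))"
    proof (rule phase[OF _ der2 matrix_vector_mul_linear BJgb])
      show "0 \<le> s" using s0 by simp
      fix r assume r: "r \<in> {0..s}"
      have "norm (g (y2 r) - g xb - Jg *v (y2 r - xb)) \<le> \<epsilon> * norm (y2 r - xb)"
        using \<delta>g(2) y2M[OF r] Msg by (smt (verit))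
      also have "\<dots> \<le> \<epsilon> * (2 * (M * s))" using y2M[OF r] \<epsilon>0 by (simp add: mult_left_mono)
      finally show "norm (g (y2 r) - g xb - Jg *v (y2 r - xb)) \<le> \<epsilon> * (2 * (M * s))" .
      show "norm (y2 r - y2 0 - r *\<^sub>R g (y2 0)) \<le> L * M * r^2"
        using Pg(5)[OF p34 rT[OF r]] unfolding y2_def using Yg by simp
    next
      have "norm (g p - g xb) \<le> L * norm (p - xb)" using lipg pK xbK by blast
      also have "\<dots> \<le> L * (M * s)" using pM L0 by (rule mult_left_mono)
      finally show "norm (g (y2 0) - g xb) \<le> L * (M * s)" using y20 by simp
    qed (use BJ0 L0 M0 s0 in auto)
    have q1: "norm (p - xb - s *\<^sub>R F) \<le> L * M * s^2"
      using Pf(5)[OF xb0 sTT] unfolding p_def y1_def F_def by simp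
    define e where "e = y2 s - xb - s *\<^sub>R v - s^2 *\<^sub>R w"
    define e1 where "e1 = p - xb - s *\<^sub>R F - (s^2/2) *\<^sub>R (Jf *v F)"
    define e2 where "e2 = y2 s - p - s *\<^sub>R Gv - s *\<^sub>R (Jg *v (p - xb)) - (s^2/2) *\<^sub>R (Jg *v Gv)"
    have e_eq: "e = e1 + e2 + s *\<^sub>R (Jg *v (p - xb - s *\<^sub>R F))"
      unfolding e_def e1_def e2_def v_def w_def
      by (simp add: algebra_simps power2_eq_square)
    have ne1: "norm e1 \<le> 3 * s * (\<epsilon> * (M * s) + BJ * (L * M * s^2))"
      using ph1 unfolding e1_def y10 p_def F_def by simp
    have ne2: "norm e2 \<le> 3 * s * (\<epsilon> * (2 * (M * s)) + BJ * (L * M * s^2 + s * (L * (M * s))))"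
      using ph2 unfolding e2_def y20 Gv_def by simp
    have ne3: "norm (s *\<^sub>R (Jg *v (p - xb - s *\<^sub>R F))) \<le> s * (BJ * (L * M * s^2))"
    proof -
      have "norm (Jg *v (p - xb - s *\<^sub>R F)) \<le> BJ * (L * M * s^2)"
        using BJgb[of "p - xb - s *\<^sub>R F"] q1 BJ0 by (smt (verit) mult_left_mono)
      then show ?thesis using s0 by (simp add: mult_left_mono)
    qed
    have ne: "norm e \<le> \<eta> * s^2"
    proof -
      have "norm e \<le> norm e1 + norm e2 + norm (s *\<^sub>R (Jg *v (p - xb - s *\<^sub>R F)))"
        unfolding e_eq by (rule order_trans[OF norm_triangle_ineq add_right_mono[OF norm_triangle_ineq]])
      also have "\<dots> \<le> 3 * s * (\<epsilon> * (M * s) + BJ * (L * M * s^2))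
          + 3 * s * (\<epsilon> * (2 * (M * s)) + BJ * (L * M * s^2 + s * (L * (M * s))))
          + s * (BJ * (L * M * s^2))" using ne1 ne2 ne3 by linarith
      also have "\<dots> = s^2 * (9 * (\<epsilon> * M) + 10 * (BJ * L * M) * s)"
        by (simp add: algebra_simps power2_eq_square power3_eq_cube)
      also have "\<dots> \<le> s^2 * \<eta>"
      proof (rule mult_left_mono)
        have a: "9 * (\<epsilon> * M) = \<eta> / 2" unfolding \<epsilon>_def using M0' by simp
        have "10 * (BJ * L * M) * s \<le> 10 * (BJ * L * M) * (\<eta> / (20 * (BJ * L * M + 1)))"
          using s\<eta> BJ0 L0 M0 by (intro mult_left_mono) auto
        also have "\<dots> \<le> \<eta> / 2"
        proof -
          have pp: "0 \<le> BJ * L * M" using BJ0 L0 M0 by simp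
          have nz: "BJ * L * M + 1 \<noteq> 0" using pp by linarith
          have "10 * (BJ * L * M) * (\<eta> / (20 * (BJ * L * M + 1))) = (\<eta> / 2) * ((BJ * L * M) / (BJ * L * M + 1))"
            using nz by (simp add: field_simps)
          also have "\<dots> \<le> (\<eta> / 2) * 1"
            using pp \<eta>0 by (intro mult_left_mono) auto
          finally show ?thesis by simp
        qed
        finally show "9 * (\<epsilon> * M) + 10 * (BJ * L * M) * s \<le> \<eta>" using a by linarith
      qed simp
      finally show ?thesis by (simp add: mult.commute)
    qed
    define d where "d = y2 s - xb"
    define z where "z = s^2 *\<^sub>R w + e"
    have dz: "d = s *\<^sub>R v + z" unfolding d_def z_def e_def by simp
    have s2: "0 \<le> s^2" "s^2 \<le> s" using s0 s1 by (auto simp: power2_eq_square mult_left_le_one_le)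
    have nz': "norm z \<le> s^2 * (norm w + 1)"
    proof -
      have "norm z \<le> norm (s^2 *\<^sub>R w) + norm e" unfolding z_def by (rule norm_triangle_ineq)
      also have "\<dots> \<le> s^2 * norm w + s^2"
      proof -
        have "\<eta> * s^2 \<le> 1 * s^2" using \<eta>0 s2 by (intro mult_right_mono) auto
        then show ?thesis using ne s2 by simp
      qed
      finally show ?thesis by (simp add: algebra_simps)
    qed
    have nz: "norm z \<le> s^2 * V"
      using nz' s2 unfolding V_def by (smt (verit) mult_left_mono norm_ge_zero)
    have nd: "norm d \<le> s * V"
    proof -
      have "norm d \<le> norm (s *\<^sub>R v) + norm z" unfolding dz by (rule norm_triangle_ineq)
      also have "\<dots> \<le> s * norm v + s * (norm w + 1)"
        using nz' s2 s0 by (smt (verit) mult_right_mono norm_ge_zero norm_scaleR real_norm_def)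
      finally show ?thesis unfolding V_def by (simp add: algebra_simps)
    qed
    have nd\<delta>: "norm d < \<delta>'"
    proof -
      have "s * V \<le> (\<delta>' / (2 * V)) * V" using s\<delta>' V1 by (intro mult_right_mono) auto
      also have "\<dots> = \<delta>' / 2" using V1 by simp
      finally show ?thesis using nd \<delta>'(1) by simp
    qed
    have tay: "\<bar>u (xb + d) - u xb - gu \<bullet> d - (1/2) * ((H *v d) \<bullet> d)\<bar> \<le> Q * s^2 / 8"
    proof -
      have "(norm d)^2 \<le> (s * V)^2" using nd by (simp add: power_mono)
      then have "2 * \<epsilon>' * (norm d)^2 \<le> 2 * \<epsilon>' * (s * V)^2" using \<epsilon>'0 by simp
      also have "\<dots> = Q * s^2 / 8" unfolding \<epsilon>'_def using V1 by (simp add: field_simps power2_eq_square)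
      finally show ?thesis using \<delta>'(2)[OF nd\<delta>] by linarith
    qed
    have gud: "gu \<bullet> d = s^2 * (gu \<bullet> w) + gu \<bullet> e"
      unfolding dz z_def using gv0 by (simp add: inner_add_right)
    have gue: "\<bar>gu \<bullet> e\<bar> \<le> Q * s^2 / 8"
    proof -
      have "\<bar>gu \<bullet> e\<bar> \<le> GU * norm e" unfolding GU_def by (rule Cauchy_Schwarz_ineq2)
      also have "\<dots> \<le> GU * (\<eta> * s^2)" unfolding GU_def using ne by (simp add: mult_left_mono)
      also have "\<dots> = (GU * \<eta>) * s^2" by simp
      also have "\<dots> \<le> (Q / 8) * s^2" using GU\<eta> s2(1) by (rule mult_right_mono)
      finally show ?thesis by simp
    qed
    define R2 where "R2 = s * ((H *v v) \<bullet> z) + s * ((H *v z) \<bullet> v) + (H *v z) \<bullet> z"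
    have Hdd: "(H *v d) \<bullet> d = s^2 * ((H *v v) \<bullet> v) + R2"
    proof -
      have "(H *v d) \<bullet> d = (s *\<^sub>R (H *v v) + H *v z) \<bullet> (s *\<^sub>R v + z)"
        unfolding dz by (simp only: matrix_vector_right_distrib matrix_vector_mult_scaleR)
      also have "\<dots> = s * s * ((H *v v) \<bullet> v) + s * ((H *v v) \<bullet> z) + s * ((H *v z) \<bullet> v) + (H *v z) \<bullet> z"
        by (simp only: inner_add_left inner_add_right inner_scaleR_left inner_scaleR_right) (simp add: field_simps)
      finally show ?thesis unfolding R2_def by (simp add: power2_eq_square)
    qed
    have R2b: "\<bar>R2\<bar> \<le> 3 * (BH * V^2) * s^3"
    proof -
      have nv: "norm v \<le> V" unfolding V_def by simp
      have BV: "0 \<le> BH * V" using BH V1 by simp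
      have t1: "\<bar>(H *v v) \<bullet> z\<bar> \<le> BH * V^2 * s^2"
      proof -
        have "\<bar>(H *v v) \<bullet> z\<bar> \<le> norm (H *v v) * norm z" by (rule Cauchy_Schwarz_ineq2)
        also have "\<dots> \<le> (BH * V) * (s^2 * V)"
          using BH(2)[of v] nv nz BH(1) BV by (smt (verit) mult_left_mono mult_mono norm_ge_zero)
        finally show ?thesis by (simp add: power2_eq_square mult_ac)
      qed
      have t2: "\<bar>(H *v z) \<bullet> v\<bar> \<le> BH * V^2 * s^2"
      proof -
        have "\<bar>(H *v z) \<bullet> v\<bar> \<le> norm (H *v z) * norm v" by (rule Cauchy_Schwarz_ineq2)
        also have "\<dots> \<le> (BH * (s^2 * V)) * V"
          using BH(2)[of z] nv nz BH(1) s2 V1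
          by (smt (verit) mult_left_mono mult_mono norm_ge_zero zero_le_mult_iff)
        finally show ?thesis by (simp add: power2_eq_square mult_ac)
      qed
      have t3: "\<bar>(H *v z) \<bullet> z\<bar> \<le> BH * V^2 * s^3"
      proof -
        have "\<bar>(H *v z) \<bullet> z\<bar> \<le> norm (H *v z) * norm z" by (rule Cauchy_Schwarz_ineq2)
        also have "\<dots> \<le> (BH * (s^2 * V)) * (s^2 * V)"
          using BH(2)[of z] nz BH(1) s2 V1
          by (smt (verit) mult_left_mono mult_mono norm_ge_zero zero_le_mult_iff)
        also have "\<dots> = BH * V^2 * s^2 * s^2" by (simp add: power2_eq_square mult_ac)
        also have "\<dots> \<le> BH * V^2 * s^2 * s" using s2 BH(1) by (intro mult_left_mono) auto
        finally show ?thesis by (simp add: power2_eq_square power3_eq_cube mult_ac)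
      qed
      have "\<bar>R2\<bar> \<le> s * \<bar>(H *v v) \<bullet> z\<bar> + s * \<bar>(H *v z) \<bullet> v\<bar> + \<bar>(H *v z) \<bullet> z\<bar>"
        unfolding R2_def using s0 by (simp add: abs_mult abs_triangle_ineq order_trans[OF abs_triangle_ineq])
      also have "\<dots> \<le> s * (BH * V^2 * s^2) + s * (BH * V^2 * s^2) + BH * V^2 * s^3"
        using t1 t2 t3 s0 by (smt (verit) mult_left_mono)
      finally show ?thesis by (simp add: power2_eq_square power3_eq_cube algebra_simps)
    qed
    have R2Q: "(1/2) * \<bar>R2\<bar> \<le> Q * s^2 / 8"
    proof -
      have "12 * (BH * V^2) * s \<le> 12 * ((BH + 1) * V^2) * s" using s0 V1 by (intro mult_right_mono) auto
      also have "\<dots> \<le> 12 * ((BH + 1) * V^2) * (Q / (12 * (BH + 1) * V^2))"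
        using sQ BH(1) by (intro mult_left_mono) auto
      also have "\<dots> = Q"
      proof -
        have X: "12 * (BH + 1) * V^2 \<noteq> 0" using BH(1) V1 by auto
        have "12 * ((BH + 1) * V^2) * (Q / (12 * (BH + 1) * V^2)) = (12 * (BH + 1) * V^2) * (Q / (12 * (BH + 1) * V^2))"
          by (simp only: mult.assoc)
        also have "\<dots> = Q" using X by (metis nonzero_mult_div_cancel_left times_divide_eq_right)
        finally show ?thesis .
      qed
      finally have a: "12 * (BH * V^2) * s \<le> Q" .
      have "(1/2) * \<bar>R2\<bar> \<le> (1/2) * (3 * (BH * V^2) * s^3)" using R2b by simp
      also have "\<dots> = (12 * (BH * V^2) * s) * s^2 / 8" by (simp add: power2_eq_square power3_eq_cube)
      also have "\<dots> \<le> Q * s^2 / 8" using mult_right_mono[OF a s2(1)] by (simp add: divide_right_mono mult_ac)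
      finally show ?thesis .
    qed
    have final: "u (y2 s) - u xb < 0"
    proof -
      have e: "xb + d = y2 s" unfolding d_def by simp
      have "u (xb + d) - u xb = (gu \<bullet> d + (1/2) * ((H *v d) \<bullet> d)) + (u (xb + d) - u xb - gu \<bullet> d - (1/2) * ((H *v d) \<bullet> d))"
        by simp
      also have "gu \<bullet> d + (1/2) * ((H *v d) \<bullet> d) = s^2 * (gu \<bullet> w + (1/2) * ((H *v v) \<bullet> v)) + gu \<bullet> e + (1/2) * R2"
        unfolding gud Hdd by (simp add: distrib_left)
      also have "\<dots> = - Q * s^2 / 2 + gu \<bullet> e + (1/2) * R2" unfolding Qid by simp
      finally have eq: "u (xb + d) - u xb = - Q * s^2 / 2 + gu \<bullet> e + (1/2) * R2 + (u (xb + d) - u xb - gu \<bullet> d - (1/2) * ((H *v d) \<bullet> d))" .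
      have a: "gu \<bullet> e \<le> Q * s^2 / 8" using gue by linarith
      have b: "(1/2) * R2 \<le> Q * s^2 / 8" using R2Q abs_ge_self[of R2] by linarith
      have c: "u (xb + d) - u xb - gu \<bullet> d - (1/2) * ((H *v d) \<bullet> d) \<le> Q * s^2 / 8" using tay by linarith
      have "u (xb + d) - u xb \<le> - Q * s^2 / 2 + Q * s^2 / 8 + Q * s^2 / 8 + Q * s^2 / 8"
        using eq a b c by linarith
      moreover have "0 < Q * s^2" using Q0 s0 by simp
      ultimately show ?thesis unfolding e by linarith
    qed
    show ?thesis
    proof (intro exI conjI)
      show "0 < s" "s \<le> T" by fact+
      show "2 * s < t0" using st0 t0 by linarith
      show "u (Yg (Yf xb s) s) < u xb" using final unfolding y2_def p_def y1_def by simp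
    qed

  qed

  show ?thesis unfolding STLA_def
  proof (intro allI impI)
    fix t0 :: real assume t0: "0 < t0"
    obtain s where s: "0 < s" "s \<le> T" "2 * s < t0" and us: "u (Yg (Yf xb s) s) < u xb"
      using key[OF t0] by blast
    have sT: "s \<in> {0..T}" using s by auto
    define p where "p x = Yf x s" for x
    define E where "E x = Yg (p x) s" for x
    have Ms: "M * s \<le> 1/4" using MT s M0 by (smt (verit) mult_left_mono)
    have p_near: "norm (p x - xb) \<le> 1/2" if x: "norm (x - xb) \<le> 1/4" for x
    proof -
      have "norm (p x - x) \<le> M * s" unfolding p_def using Pf(1)[OF _ sT] x by simp
      then show ?thesis using x Ms norm_triangle_ineq[of "p x - x" "x - xb"] by simp
    qed
    have E_lip: "norm (E x - E xb) \<le> 4 * norm (x - xb)" if x: "norm (x - xb) \<le> 1/4" for x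
    proof -
      have "norm (E x - E xb) \<le> 2 * norm (p x - p xb)" unfolding E_def using Yg sT by blast
      also have "norm (p x - p xb) \<le> 2 * norm (x - xb)" unfolding p_def using Yf sT by blast
      finally show ?thesis by simp
    qed
    have "isCont u (E xb)" using ud differentiable_imp_continuous_within by blast
    then obtain \<delta> where \<delta>: "\<delta> > 0" "\<And>y. dist y (E xb) < \<delta> \<Longrightarrow> dist (u y) (u (E xb)) < u xb - u (E xb)"
      unfolding continuous_at_eps_delta using us unfolding E_def p_def by (metis diff_gt_0_iff_gt)
    have "ball xb (min (1/4) (\<delta>/4)) \<subseteq> reach_set \<sigma> {x. u x \<le> u xb} t0"
    proof
      fix x assume "x \<in> ball xb (min (1/4) (\<delta>/4))"
      then have x1: "norm (x - xb) \<le> 1/4" and x2: "norm (x - xb) < \<delta>/4"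
        by (auto simp: dist_norm norm_minus_commute)
      have "dist (E x) (E xb) < \<delta>" using E_lip[OF x1] x2 by (simp add: dist_norm)
      then have uE: "u (E x) \<le> u xb" using \<delta>(2) by (smt (verit) dist_real_def)
      have pn: "norm (p x - xb) \<le> 3/4" using p_near[OF x1] by simp
      have tr: "trajectory \<sigma> (\<lambda>r. if r < s then a1 else a2) x (2 * s) (\<lambda>r. if r \<le> s then Yf x r else Yg (p x) (r - s))"
        and tr2: "(\<lambda>r. if r \<le> s then Yf x r else Yg (p x) (r - s)) (2 * s) = Yg (p x) s"
      proof -
        have A: "((\<lambda>r. \<sigma> (Yf x r) *v a1) has_integral (Yf x t - x)) {0..t}" if "t \<in> {0..s}" for t
          using Pf(4)[of x t] x1 that s unfolding f_def vf_def by auto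
        have B: "((\<lambda>r. \<sigma> (Yg (p x) r) *v a2) has_integral (Yg (p x) t - Yf x s)) {0..t}" if "t \<in> {0..s}" for t
          using Pg(4)[of "p x" t] pn that s unfolding g_def vf_def p_def by auto
        have Y0: "Yf x 0 = x" "Yg (p x) 0 = Yf x s" using Yf Yg unfolding p_def by auto
        note C = traj_build[of s "Yf x" x \<sigma> a1 "Yg (p x)" a2, OF s(1) Y0(1) A Y0(2) B]
        show "trajectory \<sigma> (\<lambda>r. if r < s then a1 else a2) x (2 * s) (\<lambda>r. if r \<le> s then Yf x r else Yg (p x) (r - s))"
          using C(1) .
        show "(\<lambda>r. if r \<le> s then Yf x r else Yg (p x) (r - s)) (2 * s) = Yg (p x) s"
          using s by simp
      qed
      show "x \<in> reach_set \<sigma> {x. u x \<le> u xb} t0"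
        unfolding reach_set_def
        using step_admissible[OF a12, of s] tr tr2 s uE unfolding E_def
        by (intro CollectI exI[of _ "\<lambda>r. if r < s then a1 else a2"] conjI exI[of _ "2 * s"]
            exI[of _ "\<lambda>r. if r \<le> s then Yf x r else Yg (p x) (r - s)"]) auto
    qed
    then show "xb \<in> interior (reach_set \<sigma> {x. u x \<le> u xb} t0)"
      unfolding mem_interior using \<delta>(1) by (intro exI[of _ "min (1/4) (\<delta>/4)"]) auto
  qed
qed

end
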